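(* Let $q=p^h$ with $p>3$ prime, $q\ge 7$, and let $X,T$ be positive integers with $X+T\ge 3(q+2)$. Let $\mathcal{E}$ be an $\mathbb{F}_{q^2}$-maximal elliptic curve over $\mathbb{F}_{q^2}$ with affine equation $y^2=f(x)$, $\deg f=3$, and $\gamma=\#\{z\in\mathbb{F}_{q^2}: f(z)=0\}$. Define $$\mathcal{R}^{\mathcal{E}}_{\max}=\frac{L^{\mathcal{E}}}{L^{\mathcal{E}}+X+T+8},\qquad L^{\mathcal{E}}=2\left\lfloor\frac{\#\mathcal{E}(\mathbb{F}_{q^2})-(X+T+\gamma+9)}{4}\right\rfloor-1,$$ $$\mathcal{R}^{\mathcal{H}_q}_{\max}=\frac{L^{\mathcal{H}}}{L^{\mathcal{H}}+X+T+3q^2-q-2},\qquad L^{\mathcal{H}}=mq-\frac{q(q-1)}{2},\quad m=\left\lfloor\frac{q^3-3q^2+q+1-(X+T)}{2q}\right\rfloor.$$ Then $\mathcal{R}^{\mathcal{H}_q}_{\max}>\mathcal{R}^{\mathcal{E}}_{\max}$.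
   Context: An elliptic curve over $\mathbb{F}_{q^2}$ is $\mathbb{F}_{q^2}$-maximal if it has $q^2+1+2q$ rational points. $\mathcal{R}^{\mathcal{E}}_{\max}$ is the maximal rate of the known $X$-secure $T$-private PIR construction from the elliptic curve $\mathcal{E}$ (rate $L/(L+X+T+8)$), and $\mathcal{R}^{\mathcal{H}_q}_{\max}$ is the maximal rate of the PIR construction from the Hermitian curve $X^{q+1}=Y^q+Y$ over $\mathbb{F}_{q^2}$ (rate $L/N$ with $N=L+X+T+3q^2-q-2$). *)

theory Defs
  imports "HOL-Computational_Algebra.Computational_Algebra" "HOL-Library.Cardinality"
begin

text \<open>An elliptic curve over the finite field 'k (characteristic > 3) in short form
  y^2 = f(x), with f a cubic without repeated roots (f coprime to its derivative).\<close>
definition is_elliptic_cubic :: "'k::{field,finite} poly \<Rightarrow> bool" where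
  "is_elliptic_cubic f \<longleftrightarrow> degree f = 3 \<and> coprime f (pderiv f)"

text \<open>Number of rational points: affine solutions plus the point at infinity.\<close>
definition ell_num_points :: "'k::{field,finite} poly \<Rightarrow> nat" where
  "ell_num_points f = card {(x, y). y ^ 2 = poly f x} + 1"

definition num_roots :: "'k::{field,finite} poly \<Rightarrow> nat" where
  "num_roots f = card {z. poly f z = 0}"

definition L_E :: "nat \<Rightarrow> nat \<Rightarrow> nat \<Rightarrow> nat \<Rightarrow> int" where
  "L_E N X T \<gamma> = 2 * \<lfloor>(real N - real (X + T + \<gamma> + 9)) / 4\<rfloor> - 1"

definition R_E_max :: "nat \<Rightarrow> nat \<Rightarrow> nat \<Rightarrow> nat \<Rightarrow> real" where
  "R_E_max N X T \<gamma> = real_of_int (L_E N X T \<gamma>) / (real_of_int (L_E N X T \<gamma>) + real X + real T + 8)"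

definition m_H :: "nat \<Rightarrow> nat \<Rightarrow> nat \<Rightarrow> int" where
  "m_H q X T = \<lfloor>(real q ^ 3 - 3 * real q ^ 2 + real q + 1 - real (X + T)) / (2 * real q)\<rfloor>"

definition L_H :: "nat \<Rightarrow> nat \<Rightarrow> nat \<Rightarrow> real" where
  "L_H q X T = real_of_int (m_H q X T) * real q - real q * (real q - 1) / 2"

definition R_H_max :: "nat \<Rightarrow> nat \<Rightarrow> nat \<Rightarrow> real" where
  "R_H_max q X T = L_H q X T / (L_H q X T + real X + real T + 3 * real q ^ 2 - real q - 2)"

end

theory Submission
  imports Defs
begin

lemma poly_key:
  fixes q s :: real
  assumes "q \<ge> 8" "s \<ge> 3*q+6"
  shows "(q^3-4*q^2+1-s)*(s+8) > (q^2+2*q-10-s)*(s+3*q^2-q-2)"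
proof -
  have c1: "q^3-2*q^2-3*q+1 > 0"
  proof -
    have "q^3 = q*q*q" by (simp add: power3_eq_cube)
    have "q*q*q \<ge> 8*(q*q)" using assms by (simp add: mult_right_mono)
    moreover have "q*q \<ge> 8*q" using assms by simp
    ultimately show ?thesis unfolding power2_eq_square power3_eq_cube using assms by linarith
  qed
  have "s*(q^3-2*q^2-3*q+1) \<ge> (3*q+6)*(q^3-2*q^2-3*q+1)"
    using c1 assms by (intro mult_right_mono) auto
  moreover have "(3*q+6)*(q^3-2*q^2-3*q+1) + 8*(q^3-4*q^2+1) - (q^2+2*q-10)*(3*q^2-q-2) > 0"
  proof -
    have e: "(3*q+6)*(q^3-2*q^2-3*q+1) + 8*(q^3-4*q^2+1) - (q^2+2*q-10)*(3*q^2-q-2)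
       = q*q*(3*q-19) - 21*q - 6 + (3*q+6)/2*0"
      by (simp add: algebra_simps power2_eq_square power3_eq_cube)
    have "q*q*(3*q-19) \<ge> q*q*5" using assms by (intro mult_left_mono) auto
    moreover have "q*q*5 \<ge> 8*q*5" using assms by (intro mult_right_mono) auto
    ultimately show ?thesis unfolding e using assms by linarith
  qed
  ultimately have "s*(q^3-2*q^2-3*q+1) + 8*(q^3-4*q^2+1) - (q^2+2*q-10)*(3*q^2-q-2) > 0"
    by linarith
  moreover have "(q^3-4*q^2+1-s)*(s+8) - (q^2+2*q-10-s)*(s+3*q^2-q-2)
     = s*(q^3-2*q^2-3*q+1) + 8*(q^3-4*q^2+1) - (q^2+2*q-10)*(3*q^2-q-2)"
    by (simp add: algebra_simps power2_eq_square power3_eq_cube)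
  ultimately show ?thesis by linarith
qed

lemma poly_key7:
  fixes s :: real
  assumes "s \<ge> 28"
  shows "(7^3-4*7^2+1-s)*(s+8) > (7^2+2*7-10-s)*(s+3*7^2-7-2::real)"
proof -
  have "(7^3-4*7^2+1-s)*(s+8) - (7^2+2*7-10-s)*(s+3*7^2-7-2::real) = 225*s - 6130"
    by (simp add: algebra_simps power2_eq_square)
  then show ?thesis using assms by linarith
qed

lemma frac_cmp: "(0::real) < d1 \<Longrightarrow> 0 < d2 \<Longrightarrow> b*d2 < a*d1 \<Longrightarrow> b/d1 < a/d2"
  by (simp add: divide_simps mult.commute)

lemma fl_gt: "real_of_int \<lfloor>x::real\<rfloor> > x - 1"
  using floor_correct[of x] by linarith

theorem proposition4p8:
  fixes f :: "'k::{field,finite} poly"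
    and p h q X T :: nat
  assumes "prime p" and "p > 3" and "q = p ^ h" and "q \<ge> 7"
    and "CARD('k) = q ^ 2" and "CHAR('k) = p"
    and "X > 0" and "T > 0" and "X + T \<ge> 3 * (q + 2)"
    and "is_elliptic_cubic f"
    and "ell_num_points f = q ^ 2 + 1 + 2 * q"
  shows "R_H_max q X T > R_E_max (ell_num_points f) X T (num_roots f)"
proof -
  define g where "g = num_roots f"
  define Q where "Q = real q"
  define s where "s = real X + real T"
  have gle: "g \<le> q^2" unfolding g_def num_roots_def using assms(5)
    using card_mono[OF finite subset_UNIV, of "{z. poly f z = 0}"] by simp
  have Q7: "Q \<ge> 7" using assms(4) unfolding Q_def by simp
  have s3: "s \<ge> 3*Q+6"
  proof -
    have "real (3*(q+2)) \<le> real (X+T)" using assms(9) by (simp only: of_nat_le_iff)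
    then show ?thesis unfolding s_def Q_def by simp
  qed
  define a where "a = L_H q X T"
  define b where "b = real_of_int (L_E (ell_num_points f) X T g)"
  have ma: "real_of_int (m_H q X T) > (Q^3-3*Q^2+Q+1-s)/(2*Q) - 1"
    unfolding m_H_def Q_def s_def using fl_gt by (simp add: add.commute)
  have aeq: "a = real_of_int (m_H q X T) * Q - Q*(Q-1)/2" unfolding a_def L_H_def Q_def by simp
  have Qp: "Q > 0" using Q7 by simp
  have "real_of_int (m_H q X T) * Q > ((Q^3-3*Q^2+Q+1-s)/(2*Q) - 1) * Q"
    using ma Qp by (intro mult_strict_right_mono) auto
  also have "((Q^3-3*Q^2+Q+1-s)/(2*Q) - 1) * Q = (Q^3-3*Q^2+Q+1-s)/2 - Q"
    using Qp by (simp add: field_simps)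
  finally have alow: "a > (Q^3-4*Q^2+1-s)/2" unfolding aeq
    by (simp add: algebra_simps power2_eq_square power3_eq_cube field_simps)
  have Neq: "real (ell_num_points f) = Q^2+2*Q+1" using assms(11) unfolding Q_def by simp
  have beq: "b = 2 * real_of_int \<lfloor>(Q^2+2*Q+1 - (s + real g + 9)) / 4\<rfloor> - 1"
    unfolding b_def L_E_def Neq s_def by simp
  have bup: "b \<le> (Q^2+2*Q-10-s)/2"
  proof -
    have "real_of_int \<lfloor>(Q^2+2*Q+1 - (s + real g + 9)) / 4\<rfloor> \<le> (Q^2+2*Q+1 - (s + real g + 9)) / 4"
      by (rule of_int_floor_le)
    then show ?thesis unfolding beq by simp
  qed
  have blow: "b \<ge> (Q^2+2*Q+1 - (s + real g + 9))/2 - 3"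
  proof -
    have "real_of_int \<lfloor>(Q^2+2*Q+1 - (s + real g + 9)) / 4\<rfloor> > (Q^2+2*Q+1 - (s + real g + 9)) / 4 - 1"
      by (rule fl_gt)
    then show ?thesis unfolding beq by linarith
  qed
  have gQ: "real g \<le> Q^2"
  proof -
    have "real g \<le> real (q^2)" using gle by (simp only: of_nat_le_iff)
    then show ?thesis unfolding Q_def by simp
  qed
  have dE: "b + s + 8 > 0" using blow gQ s3 Q7 by (simp add: field_simps)
  have cH: "s + 3*Q^2 - Q - 2 > 0"
  proof -
    have "Q^2 \<ge> 7*Q" using Q7 by (simp add: power2_eq_square)
    then show ?thesis using s3 Q7 by linarith
  qed
  have key: "a*(s+8) > b*(s + 3*Q^2 - Q - 2)"
  proof (cases "q = 7 \<and> X + T < 28")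
    case True
    then have q7: "q = 7" and XT: "X + T = 27" using assms(9) by auto
    have s27: "s = 27" unfolding s_def using XT
      by (metis of_nat_add of_nat_numeral)
    have "m_H q X T = 12" unfolding m_H_def q7 using XT by simp
    then have "a = 63" unfolding aeq Q_def q7 by simp
    moreover have "b \<le> 13" using bup unfolding Q_def q7 s27 by simp
    ultimately show ?thesis unfolding Q_def q7 s27 by simp
  next
    case False
    define A where "A = (Q^3-4*Q^2+1-s)/2"
    define B where "B = (Q^2+2*Q-10-s)/2"
    have "A*(s+8) > B*(s + 3*Q^2 - Q - 2)"
    proof (cases "q = 7")
      case True
      then have "X + T \<ge> 28" using False by auto
      then have "s \<ge> 28" unfolding s_def
        by (metis of_nat_add of_nat_le_iff of_nat_numeral)
      from poly_key7[OF this] show ?thesis unfolding A_def B_def Q_def True by simp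
    next
      case False
      then have "Q \<ge> 8" using assms(4) unfolding Q_def by simp
      from poly_key[OF this] s3 show ?thesis unfolding A_def B_def by simp
    qed
    moreover have "a*(s+8) \<ge> A*(s+8)" using alow s3 Q7 unfolding A_def
      by (intro mult_right_mono) auto
    moreover have "b*(s + 3*Q^2 - Q - 2) \<le> B*(s + 3*Q^2 - Q - 2)" using bup cH unfolding B_def
      by (intro mult_right_mono) auto
    ultimately show ?thesis by linarith
  qed
  have dH: "a + s + 3*Q^2 - Q - 2 > 0"
  proof -
    have "Q^3 \<ge> 7*Q^2" using Q7 by (simp add: power2_eq_square power3_eq_cube)
    moreover have "Q^2 \<ge> 7*Q" using Q7 by (simp add: power2_eq_square)
    ultimately show ?thesis using alow s3 Q7 by (simp add: field_simps)
  qed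
  have "b / (b + s + 8) < a / (a + s + 3*Q^2 - Q - 2)"
  proof (rule frac_cmp[OF dE dH])
    have "b * (a + s + 3*Q^2 - Q - 2) = a*b + b*(s + 3*Q^2 - Q - 2)" by (simp add: algebra_simps)
    moreover have "a * (b + s + 8) = a*b + a*(s+8)" by (simp add: algebra_simps)
    ultimately show "b * (a + s + 3*Q^2 - Q - 2) < a * (b + s + 8)" using key by linarith
  qed
  then show ?thesis unfolding R_H_max_def R_E_max_def a_def[symmetric] g_def[symmetric]
     b_def[symmetric] Q_def[symmetric] by (simp add: algebra_simps s_def)
qed

end
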